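(* Let $0<\kappa<1$, $\lambda=\sqrt{1-\kappa^2}$, and let $k\in(0,1)$ be defined by $k^2=\frac{1-\lambda}{1+\lambda}$ (so that $\kappa^2=\frac{4k^2}{(1+k^2)^2}$). For $\phi$ near $0$ define $$u(\phi)=\int_0^{\phi} F\!\left(\tfrac14,\tfrac34;\tfrac12;\kappa^2\sin^2\theta\right)\,\mathrm{d}\theta ,$$ let $u\mapsto\phi(u)$ be the local inverse near $0$ with $\phi(0)=0$, and set $s(u)=\sin\phi(u)$. Let $\mathrm{sn},\mathrm{dn}$ be the Jacobian elliptic functions of modulus $k$. Then $$s^2(u)=\mathrm{sn}^2\!\left[(1+k^2)^{-1/2}u\right]\Big\{k^2+\mathrm{dn}^2\!\left[(1+k^2)^{-1/2}u\right]\Big\}.$$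
   Context: $F(a,b;c;z)$ denotes the Gauss hypergeometric function ${}_2F_1(a,b;c;z)$. $\mathrm{sn},\mathrm{cn},\mathrm{dn}$ are the standard Jacobian elliptic functions of modulus $k$. The identity holds near $u=0$ (and hence for the meromorphic extension of $s^2$). *)

theory Defs
  imports "HOL-Analysis.Analysis"
begin

text \<open>Gauss hypergeometric function 2F1(a,b;c;z) as its power series (used for |z| < 1).\<close>
definition hyp2F1 :: "real \<Rightarrow> real \<Rightarrow> real \<Rightarrow> real \<Rightarrow> real" where
  "hyp2F1 a b c z =
     (\<Sum>n. pochhammer a n * pochhammer b n / (pochhammer c n * fact n) * z ^ n)"

definition ell_F :: "real \<Rightarrow> real \<Rightarrow> real" where
  "ell_F k \<phi> = (LBINT \<theta>=0..\<phi>. 1 / sqrt (1 - k\<^sup>2 * (sin \<theta>)\<^sup>2))"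

definition jacobi_am :: "real \<Rightarrow> real \<Rightarrow> real" where
  "jacobi_am k u = (THE \<phi>. ell_F k \<phi> = u)"

definition jacobi_sn :: "real \<Rightarrow> real \<Rightarrow> real" where
  "jacobi_sn k u = sin (jacobi_am k u)"

definition jacobi_cn :: "real \<Rightarrow> real \<Rightarrow> real" where
  "jacobi_cn k u = cos (jacobi_am k u)"

definition jacobi_dn :: "real \<Rightarrow> real \<Rightarrow> real" where
  "jacobi_dn k u = sqrt (1 - k\<^sup>2 * (jacobi_sn k u)\<^sup>2)"

end

theory Submission
  imports Defs
begin


lemma FTC_at:
  fixes f :: "real \<Rightarrow> real"
  assumes "continuous_on UNIV f"
  shows "((\<lambda>u. LBINT y=0..u. f y) has_real_derivative f x) (at x)"
proof -
  have "((\<lambda>u. LBINT y=0..u. f y) has_vector_derivative f x) (at x within {-\<bar>x\<bar>-1..\<bar>x\<bar>+1})"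
    using interval_integral_FTC2[of "-\<bar>x\<bar>-1" 0 "\<bar>x\<bar>+1" f x]
    using continuous_on_subset[OF assms] by (auto simp: zero_ereal_def)
  moreover have "at x within {-\<bar>x\<bar>-1..\<bar>x\<bar>+1} = at x"
    by (rule at_within_Icc_at) auto
  ultimately show ?thesis
    by (simp add: has_real_derivative_iff_has_vector_derivative)
qed

lemma hyp_closed:
  fixes x :: real
  assumes "0 \<le> x" "x < 1"
  shows "hyp2F1 (1/4) (3/4) (1/2) (x\<^sup>2) = ((1+x) powr (-1/2) + (1-x) powr (-1/2)) / 2"
proof -
  define c where "c n = ((-1/2::real) gchoose n)" for n
  have S1: "(\<lambda>n. c n * x^n) sums (1+x) powr (-1/2)"
    unfolding c_def by (rule gen_binomial_real) (use assms in auto)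
  have S2: "(\<lambda>n. c n * (-x)^n) sums (1+(-x)) powr (-1/2)"
    unfolding c_def by (rule gen_binomial_real) (use assms in auto)
  have S: "(\<lambda>n. c n * (x^n + (-x)^n)) sums ((1+x) powr (-1/2) + (1-x) powr (-1/2))"
    using sums_add[OF S1 S2] by (simp add: algebra_simps)
  have sm: "strict_mono (\<lambda>m::nat. 2*m)" by (auto simp: strict_mono_def)
  have z: "c n * (x^n + (-x)^n) = 0" if "n \<notin> range (\<lambda>m::nat. 2*m)" for n
  proof -
    have "odd n" using that by (metis evenE rangeI)
    then show ?thesis by (simp add: power_minus_odd)
  qed
  have S3: "(\<lambda>m. c (2*m) * (x^(2*m) + (-x)^(2*m))) sums ((1+x) powr (-1/2) + (1-x) powr (-1/2))"
    using sums_mono_reindex[OF sm, of "\<lambda>n. c n * (x^n + (-x)^n)", OF z] S by simp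
  have eq: "c (2*m) * (x^(2*m) + (-x)^(2*m)) = 2 * (pochhammer (1/4) m * pochhammer (3/4) m / (pochhammer (1/2) m * fact m) * (x\<^sup>2) ^ m)" for m
  proof -
    have p1: "pochhammer (1/2::real) (2*m) = of_nat (2^(2*m)) * pochhammer (1/4) m * pochhammer (3/4) m"
      using pochhammer_double[of "1/4::real" m] by (simp add: field_simps)
    have f1: "fact (2*m) = (2 ^ (2 * m) * pochhammer (1 / 2) m * fact m :: real)"
      by (rule fact_double)
    have pp: "pochhammer (1/2::real) m > 0" by (rule pochhammer_pos) simp
    have "c (2*m) = pochhammer (1/2::real) (2*m) / fact (2*m)"
      unfolding c_def gbinomial_pochhammer by simp
    also have "\<dots> = pochhammer (1/4) m * pochhammer (3/4) m / (pochhammer (1/2) m * fact m)"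
      unfolding p1 f1 using pp by (simp add: field_simps)
    finally show ?thesis by (simp add: power_mult power_even_eq)
  qed
  have "(\<lambda>m. pochhammer (1/4) m * pochhammer (3/4) m / (pochhammer (1/2) m * fact m) * (x\<^sup>2) ^ m)
        sums (((1+x) powr (-1/2) + (1-x) powr (-1/2)) / 2)"
    using sums_divide[OF S3, of 2] unfolding eq by simp
  then show ?thesis unfolding hyp2F1_def by (rule sums_unique[symmetric])
qed



lemma dn_pos: "0 < k \<Longrightarrow> k < 1 \<Longrightarrow> 0 < 1 - k\<^sup>2 * (sin (x::real))\<^sup>2"
proof -
  assume "0 < k" "k < 1"
  have "(sin x)\<^sup>2 \<le> 1" by (simp add: abs_square_le_1)
  moreover have "k\<^sup>2 < 1" using \<open>0<k\<close> \<open>k<1\<close> by (simp add: power_less_one_iff abs_less_iff)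
  ultimately have "k\<^sup>2 * (sin x)\<^sup>2 < 1"
    by (metis less_eq_real_def linorder_not_le mult_le_one not_one_le_zero zero_le_power2 mult_less_cancel_left1 mult_right_le_one_le)
  then show ?thesis by simp
qed

lemma ellF_deriv:
  assumes "0 < k" "k < 1"
  shows "(ell_F k has_real_derivative 1 / sqrt (1 - k\<^sup>2 * (sin x)\<^sup>2)) (at x)"
proof -
  have e: "ell_F k = (\<lambda>u. LBINT y=0..u. 1 / sqrt (1 - k\<^sup>2 * (sin y)\<^sup>2))"
    by (rule ext) (simp add: ell_F_def)
  have "continuous_on UNIV (\<lambda>y. 1 / sqrt (1 - k\<^sup>2 * (sin y)\<^sup>2))"
    using dn_pos[OF assms] by (intro continuous_intros) (auto simp: less_le)
  then show ?thesis unfolding e by (rule FTC_at)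
qed

lemma ellF_0: "ell_F k 0 = 0"
  by (simp add: ell_F_def zero_ereal_def)

lemma ellF_ge:
  assumes "0 < k" "k < 1" "y \<le> x"
  shows "x - y \<le> ell_F k x - ell_F k y"
proof -
  have "(\<lambda>t. ell_F k t - t) y \<le> (\<lambda>t. ell_F k t - t) x"
  proof (rule DERIV_nonneg_imp_increasing_open[OF assms(3)])
    fix t
    have "1 - k\<^sup>2 * (sin t)\<^sup>2 \<le> 1" by simp
    then have "sqrt (1 - k\<^sup>2 * (sin t)\<^sup>2) \<le> 1" by simp
    then have "1 \<le> 1 / sqrt (1 - k\<^sup>2 * (sin t)\<^sup>2)"
      using dn_pos[OF assms(1,2), of t] by (simp add: field_simps)
    then show "\<exists>d. ((\<lambda>t. ell_F k t - t) has_real_derivative d) (at t) \<and> 0 \<le> d"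
      using ellF_deriv[OF assms(1,2), of t] by (intro exI conjI derivative_eq_intros) auto
  next
    show "continuous_on {y..x} (\<lambda>t. ell_F k t - t)"
      using ellF_deriv[OF assms(1,2)]
      by (intro continuous_at_imp_continuous_on ballI continuous_intros) (auto intro: DERIV_isCont)
  qed
  then show ?thesis by simp
qed

lemma ellF_strict:
  assumes "0 < k" "k < 1" "y < x"
  shows "ell_F k y < ell_F k x"
  using ellF_ge[OF assms(1,2), of y x] assms(3) by simp

lemma am_exists:
  assumes "0 < k" "k < 1"
  shows "\<exists>\<phi>. \<bar>\<phi>\<bar> \<le> \<bar>v\<bar> \<and> ell_F k \<phi> = v \<and> jacobi_am k v = \<phi>"
proof -
  have cont: "isCont (ell_F k) t" for t using ellF_deriv[OF assms] by (auto intro: DERIV_isCont)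
  have "\<exists>\<phi>. \<bar>\<phi>\<bar> \<le> \<bar>v\<bar> \<and> ell_F k \<phi> = v"
  proof (cases "0 \<le> v")
    case True
    have "v \<le> ell_F k v" using ellF_ge[OF assms True] by (simp add: ellF_0)
    then obtain x where "0 \<le> x" "x \<le> v" "ell_F k x = v"
      using IVT[of "ell_F k" 0 v v] True cont by (auto simp: ellF_0)
    then show ?thesis by (intro exI[of _ x]) auto
  next
    case False
    have "ell_F k v \<le> v" using ellF_ge[OF assms, of v 0] False by (simp add: ellF_0)
    then obtain x where "v \<le> x" "x \<le> 0" "ell_F k x = v"
      using IVT[of "ell_F k" v v 0] False cont by (auto simp: ellF_0)
    then show ?thesis by (intro exI[of _ x]) auto
  qed
  then obtain \<phi> where p: "\<bar>\<phi>\<bar> \<le> \<bar>v\<bar>" "ell_F k \<phi> = v" by blast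
  have "jacobi_am k v = \<phi>"
    unfolding jacobi_am_def
  proof (rule the_equality)
    show "ell_F k \<phi> = v" by fact
    fix x assume "ell_F k x = v"
    then show "x = \<phi>" using p(2) ellF_strict[OF assms, of x \<phi>] ellF_strict[OF assms, of \<phi> x]
      by (cases x \<phi> rule: linorder_cases) auto
  qed
  with p show ?thesis by blast
qed

lemma powr_mhalf: "0 < (x::real) \<Longrightarrow> x powr (-1/2) = 1 / sqrt x"
proof -
  assume "0 < x"
  have "x powr (-1/2) = x powr (-(1/2))" by simp
  also have "\<dots> = inverse (x powr (1/2))" by (rule powr_minus)
  finally have "x powr (-1/2) = inverse (x powr (1/2))" .
  also have "x powr (1/2) = sqrt x" using \<open>0<x\<close> by (intro powr_half_sqrt) simp
  finally show ?thesis by (simp only: inverse_eq_divide)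
qed

lemma kap_lt: "0 < k \<Longrightarrow> k < 1 \<Longrightarrow> 2*k/(1+k\<^sup>2) < (1::real)"
proof -
  assume "0<k" "k<1"
  have "0 < (1-k)\<^sup>2" using \<open>k<1\<close> by simp
  then have "2*k < 1 + k\<^sup>2" by (simp add: power2_eq_square algebra_simps)
  moreover have "0 < 1 + k\<^sup>2" by (smt (verit) zero_le_power2)
  ultimately show ?thesis by (simp add: pos_divide_less_eq)
qed

lemma base_pos:
  assumes "0 \<le> \<kappa>" "\<kappa> < 1" "\<bar>s\<bar> \<le> 1"
  shows "0 < 1 + \<kappa> * (s::real)" "0 < 1 - \<kappa> * s"
proof -
  have "\<kappa> * \<bar>s\<bar> \<le> \<kappa>" using mult_left_le[OF assms(3) assms(1)] .
  then have "\<bar>\<kappa> * s\<bar> < 1" using assms by (simp add: abs_mult)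
  then show "0 < 1 + \<kappa> * s" "0 < 1 - \<kappa> * s" by auto
qed

lemma hyp_g:
  assumes "0 \<le> \<kappa>" "\<kappa> < 1"
  shows "hyp2F1 (1/4) (3/4) (1/2) (\<kappa>\<^sup>2 * (sin t)\<^sup>2) =
         ((1 + \<kappa> * sin t) powr (-1/2) + (1 - \<kappa> * sin t) powr (-1/2)) / 2"
proof -
  have a: "\<bar>sin t\<bar> \<le> 1" by simp
  have "\<kappa> * \<bar>sin t\<bar> \<le> \<kappa>" using mult_left_le[OF a assms(1)] .
  then have "\<kappa> * \<bar>sin t\<bar> < 1" using assms by simp
  then have "hyp2F1 (1/4) (3/4) (1/2) ((\<kappa> * \<bar>sin t\<bar>)\<^sup>2) =
      ((1 + \<kappa> * \<bar>sin t\<bar>) powr (-1/2) + (1 - \<kappa> * \<bar>sin t\<bar>) powr (-1/2)) / 2"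
    using assms by (intro hyp_closed) auto
  moreover have sq: "(\<kappa> * \<bar>sin t\<bar>)\<^sup>2 = \<kappa>\<^sup>2 * (sin t)\<^sup>2" by (simp add: power_mult_distrib)
  ultimately have H: "hyp2F1 (1/4) (3/4) (1/2) (\<kappa>\<^sup>2 * (sin t)\<^sup>2) =
      ((1 + \<kappa> * \<bar>sin t\<bar>) powr (-1/2) + (1 - \<kappa> * \<bar>sin t\<bar>) powr (-1/2)) / 2" by simp
  show ?thesis
  proof (cases "sin t \<ge> 0")
    case True
    then have "\<bar>sin t\<bar> = sin t" by simp
    then show ?thesis unfolding H by simp
  next
    case False
    then have e: "\<bar>sin t\<bar> = - sin t" by simp
    have "1 + \<kappa> * - sin t = 1 - \<kappa> * sin t" "1 - \<kappa> * - sin t = 1 + \<kappa> * sin t" by simp_all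
    then show ?thesis unfolding H e by (simp only: add.commute)
  qed
qed



lemma A_deriv:
  fixes k :: real
  assumes "0 < k" "k < 1"
  defines "R \<equiv> \<lambda>x. sqrt (1 + k\<^sup>2 - k\<^sup>2 * (sin x)\<^sup>2)"
  shows "((\<lambda>x. sin x * R x) has_real_derivative cos x * (1 + k\<^sup>2 - 2*k\<^sup>2*(sin x)\<^sup>2) / R x) (at x)"
proof -
  have Rp: "0 < 1 + k\<^sup>2 - k\<^sup>2 * (sin x)\<^sup>2" using dn_pos[OF assms(1,2), of x] by (simp add: add_pos_nonneg) (smt (verit) zero_le_power2)
  have "((\<lambda>x. sin x * R x) has_real_derivative
        cos x * R x + sin x * (inverse (sqrt (1 + k\<^sup>2 - k\<^sup>2 * (sin x)\<^sup>2)) / 2 * (- (k\<^sup>2 * (2 * sin x * cos x))))) (at x)"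
    unfolding R_def using Rp
    by (auto intro!: derivative_eq_intros simp: power2_eq_square)
  moreover have "cos x * R x + sin x * (inverse (sqrt (1 + k\<^sup>2 - k\<^sup>2 * (sin x)\<^sup>2)) / 2 * (- (k\<^sup>2 * (2 * sin x * cos x))))
      = cos x * (1 + k\<^sup>2 - 2*k\<^sup>2*(sin x)\<^sup>2) / R x"
  proof -
    have "R x > 0" unfolding R_def using Rp by simp
    moreover have "(R x)\<^sup>2 = 1 + k\<^sup>2 - k\<^sup>2 * (sin x)\<^sup>2" unfolding R_def using Rp by simp
    moreover have e: "sqrt (1 + k\<^sup>2 - k\<^sup>2 * (sin x)\<^sup>2) = R x" by (simp add: R_def)
    ultimately have "cos x * R x + sin x * (inverse (sqrt (1 + k\<^sup>2 - k\<^sup>2 * (sin x)\<^sup>2)) / 2 * (- (k\<^sup>2 * (2 * sin x * cos x))))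
       = cos x * ((R x)\<^sup>2 - k\<^sup>2 * (sin x)\<^sup>2) / R x" unfolding e
      by (simp add: field_simps power2_eq_square)
    also have "\<dots> = cos x * (1 + k\<^sup>2 - 2*k\<^sup>2*(sin x)\<^sup>2) / R x"
      using \<open>(R x)\<^sup>2 = _\<close> by simp
    finally show ?thesis .
  qed
  ultimately show ?thesis by simp
qed



lemma half_sum: "a \<noteq> 0 \<Longrightarrow> b \<noteq> (0::real) \<Longrightarrow> (s / a + s / b) / 2 = s * ((a + b)/2) / (a * b)"
  by (simp add: field_simps)

lemma key:
  fixes k \<kappa> :: real
  assumes k: "0 < k" "k < 1" and kap: "\<kappa> = 2*k/(1+k\<^sup>2)"
  defines "g \<equiv> \<lambda>\<theta>. ((1 + \<kappa> * sin \<theta>) powr (-1/2) + (1 - \<kappa> * sin \<theta>) powr (-1/2)) / 2"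
  defines "V \<equiv> \<lambda>\<phi>::real. LBINT \<theta>=0..\<phi>. g \<theta>"
  defines "R \<equiv> \<lambda>x. sqrt (1 + k\<^sup>2 - k\<^sup>2 * (sin x)\<^sup>2)"
  assumes phi: "\<bar>\<phi>\<bar> < 1"
  shows "V (arcsin (sin \<phi> * R \<phi>)) = sqrt (1+k\<^sup>2) * ell_F k \<phi>"
proof -
  have k0: "0 \<le> \<kappa>" using k kap by simp
  have k1: "\<kappa> < 1" using kap_lt[OF k] kap by simp
  have gcont: "continuous_on UNIV g"
    unfolding g_def using base_pos[OF k0 k1]
    by (intro continuous_intros) (auto simp: abs_sin_le_one less_imp_neq[symmetric])
  have Vd: "(V has_real_derivative g y) (at y)" for y
    unfolding V_def by (rule FTC_at[OF gcont])
  define S where "S = {-1<..<(1::real)}"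
  have D: "((\<lambda>x. V (arcsin (sin x * R x)) - sqrt (1+k\<^sup>2) * ell_F k x) has_real_derivative 0) (at x within S)"
    if xS: "x \<in> S" for x
  proof -
    define t where "t = sin x"
    define c where "c = cos x"
    define r where "r = R x"
    define q where "q = sqrt (1 - k\<^sup>2 * t\<^sup>2)"
    define s1 where "s1 = sqrt (1 + k\<^sup>2)"
    have pi2: "1 < pi/2" using pi_gt3 by simp
    have c0: "0 < c" unfolding c_def using xS pi2 by (intro cos_gt_zero_pi) (auto simp: S_def)
    have cc: "c\<^sup>2 = 1 - t\<^sup>2" unfolding c_def t_def by (simp add: cos_squared_eq)
    have t1: "t\<^sup>2 \<le> 1" unfolding t_def by (simp add: abs_square_le_1)
    have kt: "0 < 1 - k\<^sup>2 * t\<^sup>2" unfolding t_def by (rule dn_pos[OF k])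
    have k21: "k\<^sup>2 < 1" using k by (simp add: power_less_one_iff abs_less_iff)
    have rq0: "0 < 1 + k\<^sup>2 - k\<^sup>2 * t\<^sup>2" using kt by (smt (verit) zero_le_power2)
    have r2: "r\<^sup>2 = 1 + k\<^sup>2 - k\<^sup>2 * t\<^sup>2" unfolding r_def R_def t_def[symmetric] using rq0 by simp
    have r0: "0 < r" unfolding r_def R_def t_def[symmetric] using rq0 by simp
    have k2t2: "k\<^sup>2 * t\<^sup>2 \<le> k\<^sup>2" using t1 by (simp add: mult_left_le)
    have rkt: "k\<^sup>2 * t\<^sup>2 < r\<^sup>2" unfolding r2 using k2t2 k21 by linarith
    have rkt': "\<bar>k * t\<bar> < r" using power2_less_imp_less[of "\<bar>k*t\<bar>" r] rkt r0
      by (simp add: power_mult_distrib)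
    have q0: "0 < q" unfolding q_def using kt by simp
    have s10: "0 < s1" unfolding s1_def by (simp add: add_pos_nonneg)
    define A where "A = t * r"
    have A2: "1 - A\<^sup>2 = c\<^sup>2 * (1 - k\<^sup>2 * t\<^sup>2)"
      unfolding A_def cc power_mult_distrib r2 by (simp add: algebra_simps power2_eq_square)
    have A2pos: "0 < 1 - A\<^sup>2" unfolding A2 using c0 kt by simp
    have Ab: "-1 < A" "A < 1" using A2pos abs_square_less_1[of A] by (auto simp: abs_less_iff)
    have sqA: "sqrt (1 - A\<^sup>2) = c * q" unfolding A2 q_def using c0 by (simp add: real_sqrt_mult)
    have eP: "1 + \<kappa> * A = (r + k*t)\<^sup>2 / (1+k\<^sup>2)" and eM: "1 - \<kappa> * A = (r - k*t)\<^sup>2 / (1+k\<^sup>2)"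
    proof -
      have hk: "1 + k\<^sup>2 \<noteq> 0" by (smt (verit) zero_le_power2)
      have "(r + k*t)\<^sup>2 = 1 + k\<^sup>2 + 2*k*t*r" "(r - k*t)\<^sup>2 = 1 + k\<^sup>2 - 2*k*t*r"
        using r2 by (simp_all add: power2_eq_square algebra_simps)
      then show "1 + \<kappa> * A = (r + k*t)\<^sup>2 / (1+k\<^sup>2)" "1 - \<kappa> * A = (r - k*t)\<^sup>2 / (1+k\<^sup>2)"
        unfolding kap A_def using hk by (simp_all add: field_simps)
    qed
    have pP: "0 < r + k*t" "0 < r - k*t" using rkt' by (auto simp: abs_less_iff)
    have powP: "(1 + \<kappa> * A) powr (-1/2) = s1 / (r + k*t)"
    proof -
      have hk: "0 < 1 + k\<^sup>2" by (smt (verit) zero_le_power2)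
      have "(1 + \<kappa> * A) powr (-1/2) = 1 / sqrt (1 + \<kappa> * A)"
        by (rule powr_mhalf) (use pP hk in \<open>simp add: eP\<close>)
      also have "\<dots> = s1 / (r + k*t)" unfolding eP s1_def using pP(1) hk
        by (simp add: real_sqrt_divide)
      finally show ?thesis .
    qed
    have powM: "(1 - \<kappa> * A) powr (-1/2) = s1 / (r - k*t)"
    proof -
      have hk: "0 < 1 + k\<^sup>2" by (smt (verit) zero_le_power2)
      have "(1 - \<kappa> * A) powr (-1/2) = 1 / sqrt (1 - \<kappa> * A)"
        by (rule powr_mhalf) (use pP hk in \<open>simp add: eM\<close>)
      also have "\<dots> = s1 / (r - k*t)" unfolding eM s1_def using pP(2) hk
        by (simp add: real_sqrt_divide)
      finally show ?thesis .
    qed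
    have gA: "g (arcsin A) = s1 * r / (r\<^sup>2 - k\<^sup>2 * t\<^sup>2)"
    proof -
      have "g (arcsin A) = ((1 + \<kappa> * A) powr (-1/2) + (1 - \<kappa> * A) powr (-1/2)) / 2"
        unfolding g_def using Ab by simp
      also have "\<dots> = (s1 / (r + k*t) + s1 / (r - k*t)) / 2" unfolding powP powM ..
      also have "\<dots> = s1 * r / (r\<^sup>2 - k\<^sup>2 * t\<^sup>2)"
      proof -
        have "(r + k*t) * (r - k*t) = r\<^sup>2 - k\<^sup>2 * t\<^sup>2" by (simp add: power2_eq_square algebra_simps)
        moreover have "r + k*t \<noteq> 0" "r - k*t \<noteq> 0" using pP by auto
        then have h1: "(s1/(r+k*t) + s1/(r-k*t))/2 = s1*((r+k*t + (r-k*t))/2)/((r+k*t)*(r-k*t))"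
          by (intro half_sum) auto
        have h2: "(r + k*t + (r - k*t))/2 = r" by simp
        show ?thesis unfolding h1 h2 \<open>(r + k*t) * (r - k*t) = _\<close> ..
      qed
      finally show ?thesis .
    qed
    have dA: "((\<lambda>x. sin x * R x) has_real_derivative c * (r\<^sup>2 - k\<^sup>2 * t\<^sup>2) / r) (at x)"
    proof -
      have e: "c * (r\<^sup>2 - k\<^sup>2 * t\<^sup>2) / r = cos x * (1 + k\<^sup>2 - 2*k\<^sup>2*(sin x)\<^sup>2) / R x"
        unfolding r2 unfolding c_def r_def t_def by (simp add: algebra_simps)
      show ?thesis unfolding e R_def by (rule A_deriv[OF k])
    qed
    have chain: "((\<lambda>x. V (arcsin (sin x * R x))) has_real_derivative
        g (arcsin A) * (inverse (sqrt (1 - A\<^sup>2)) * (c * (r\<^sup>2 - k\<^sup>2 * t\<^sup>2) / r))) (at x)"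
      unfolding A_def using Vd DERIV_arcsin[OF Ab] dA unfolding A_def t_def r_def
      by (intro DERIV_chain2[where f=V] DERIV_chain2[where f=arcsin]) auto
    have eq: "g (arcsin A) * (inverse (sqrt (1 - A\<^sup>2)) * (c * (r\<^sup>2 - k\<^sup>2 * t\<^sup>2) / r))
        = s1 * (1 / q)"
      unfolding gA sqA using rkt r0 c0 q0 by (simp add: field_simps)
    have "((\<lambda>x. V (arcsin (sin x * R x)) - sqrt (1+k\<^sup>2) * ell_F k x) has_real_derivative s1 * (1/q) - s1 * (1/q)) (at x)"
      using chain[unfolded eq] DERIV_cmult[OF ellF_deriv[OF k, of x], of "sqrt (1+k\<^sup>2)"]
      unfolding s1_def q_def t_def
      by (intro DERIV_diff) auto
    then show ?thesis by (simp add: has_field_derivative_at_within)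
  qed
  obtain C where C: "\<forall>x\<in>S. V (arcsin (sin x * R x)) - sqrt (1+k\<^sup>2) * ell_F k x = C"
    using has_field_derivative_zero_constant[of S, OF _ D] by (auto simp: S_def)
  have "C = 0" using C[rule_format, of 0] by (simp add: S_def V_def ellF_0 zero_ereal_def)
  moreover have "\<phi> \<in> S" using phi by (auto simp: S_def abs_less_iff)
  ultimately show ?thesis using C by auto
qed



theorem theorem9:
  fixes \<kappa> lam k :: real and U ph :: "real \<Rightarrow> real"
  assumes "0 < \<kappa>" and "\<kappa> < 1"
    and "lam = sqrt (1 - \<kappa>\<^sup>2)"
    and "0 < k" and "k < 1" and "k\<^sup>2 = (1 - lam) / (1 + lam)"
    and "\<And>\<phi>. U \<phi> = (LBINT \<theta>=0..\<phi>. hyp2F1 (1/4) (3/4) (1/2) (\<kappa>\<^sup>2 * (sin \<theta>)\<^sup>2))"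
    and "ph 0 = 0" and "isCont ph 0"
    and "\<forall>\<^sub>F u in nhds 0. U (ph u) = u"
  shows "\<forall>\<^sub>F u in nhds 0.
           (sin (ph u))\<^sup>2 =
             (jacobi_sn k ((1 + k\<^sup>2) powr (-1/2) * u))\<^sup>2 *
             (k\<^sup>2 + (jacobi_dn k ((1 + k\<^sup>2) powr (-1/2) * u))\<^sup>2)"
proof -
  have k: "0 < k" "k < 1" using assms(4,5) .
  have hk: "0 < 1 + k\<^sup>2" by (smt (verit) zero_le_power2)
  have kap: "\<kappa> = 2*k/(1+k\<^sup>2)"
  proof -
    have k2: "\<kappa>\<^sup>2 < 1" using assms(1,2) by (simp add: power_less_one_iff)
    have l0: "0 \<le> lam" using assms(3) k2 by simp
    have l2: "lam\<^sup>2 = 1 - \<kappa>\<^sup>2" using assms(3) k2 by (simp add: less_imp_le)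
    have "k\<^sup>2 * (1 + lam) = 1 - lam" using assms(6) l0 by (simp add: field_simps)
    then have ll: "lam = (1 - k\<^sup>2) / (1 + k\<^sup>2)" using hk by (simp add: field_simps)
    have "\<kappa>\<^sup>2 = 1 - lam\<^sup>2" using l2 by simp
    also have "\<dots> = (2*k/(1+k\<^sup>2))\<^sup>2" unfolding ll
    proof -
      have "1 - ((1 - k\<^sup>2) / (1 + k\<^sup>2))\<^sup>2 = ((1 + k\<^sup>2)\<^sup>2 - (1 - k\<^sup>2)\<^sup>2) / (1+k\<^sup>2)\<^sup>2"
        using hk by (simp add: power_divide divide_simps)
      also have "(1 + k\<^sup>2)\<^sup>2 - (1 - k\<^sup>2)\<^sup>2 = (2*k)\<^sup>2" by (simp add: power2_eq_square algebra_simps)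
      finally show "1 - ((1 - k\<^sup>2) / (1 + k\<^sup>2))\<^sup>2 = (2*k/(1+k\<^sup>2))\<^sup>2" by (simp add: power_divide)
    qed
    finally show ?thesis
      by (rule power2_eq_imp_eq) (use assms(1) k hk in auto)
  qed
  have k0: "0 \<le> \<kappa>" and k1: "\<kappa> < 1" using assms(1,2) by auto
  define g where "g = (\<lambda>\<theta>. ((1 + \<kappa> * sin \<theta>) powr (-1/2) + (1 - \<kappa> * sin \<theta>) powr (-1/2)) / 2)"
  define V where "V = (\<lambda>\<phi>::real. LBINT \<theta>=0..\<phi>. g \<theta>)"
  define R where "R = (\<lambda>x. sqrt (1 + k\<^sup>2 - k\<^sup>2 * (sin x)\<^sup>2))"
  have UV: "U x = V x" for x
    unfolding assms(7) V_def g_def hyp_g[OF k0 k1] ..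
  have gcont: "continuous_on UNIV g"
    unfolding g_def using base_pos[OF k0 k1]
    by (intro continuous_intros) (auto simp: abs_sin_le_one less_imp_neq[symmetric])
  have gpos: "0 < g y" for y
    unfolding g_def using base_pos[OF k0 k1, of "sin y"] by (intro divide_pos_pos add_pos_pos) auto
  have Vd: "(V has_real_derivative g y) (at y)" for y
    unfolding V_def by (rule FTC_at[OF gcont])
  have Vmono: "V a < V b" if "a < b" for a b
    using DERIV_pos_imp_increasing[OF that] Vd gpos by blast
  have Vinj: "a = b" if "V a = V b" for a b
    using Vmono[of a b] Vmono[of b a] that by (cases a b rule: linorder_cases) auto
  have ev1: "\<forall>\<^sub>F u in nhds 0. u \<in> {-1<..<(1::real)}"
    by (rule eventually_nhds_in_open) auto
  show ?thesis
    using ev1 assms(10)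
  proof eventually_elim
    case (elim u)
    define p where "p = (1 + k\<^sup>2) powr (-1/2)"
    have p: "p = 1 / sqrt (1 + k\<^sup>2)" unfolding p_def using hk by (rule powr_mhalf)
    have s1: "1 \<le> sqrt (1 + k\<^sup>2)" by simp
    have p01: "0 < p" "p \<le> 1" unfolding p using s1 hk by (auto simp: divide_le_eq)
    define v where "v = p * u"
    have vu: "\<bar>v\<bar> < 1" unfolding v_def using p01 elim(1)
      by (simp add: abs_mult abs_less_iff) (smt (verit) mult_left_le_one_le mult_nonneg_nonneg mult_minus_right)
    obtain \<phi> where ph: "\<bar>\<phi>\<bar> \<le> \<bar>v\<bar>" "ell_F k \<phi> = v" "jacobi_am k v = \<phi>"
      using am_exists[OF k] by blast
    have kk: "V (arcsin (sin \<phi> * R \<phi>)) = sqrt (1+k\<^sup>2) * ell_F k \<phi>"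
      unfolding V_def g_def R_def by (rule key[OF k kap]) (use ph vu in auto)
    have "sqrt (1+k\<^sup>2) * ell_F k \<phi> = u" unfolding ph(2) v_def p using s1 hk by simp
    then have "V (ph u) = V (arcsin (sin \<phi> * R \<phi>))" using kk elim(2) UV by simp
    then have phu: "ph u = arcsin (sin \<phi> * R \<phi>)" by (rule Vinj)
    define t where "t = sin \<phi>"
    have kt: "0 < 1 - k\<^sup>2 * t\<^sup>2" unfolding t_def by (rule dn_pos[OF k])
    have t1: "t\<^sup>2 \<le> 1" unfolding t_def by (simp add: abs_square_le_1)
    have rq0: "0 \<le> 1 + k\<^sup>2 - k\<^sup>2 * t\<^sup>2" using kt by (smt (verit) zero_le_power2)
    have R2: "(R \<phi>)\<^sup>2 = 1 + k\<^sup>2 - k\<^sup>2 * t\<^sup>2" unfolding R_def t_def[symmetric] using rq0 by simp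
    have A2: "1 - (t * R \<phi>)\<^sup>2 = (1 - t\<^sup>2) * (1 - k\<^sup>2 * t\<^sup>2)"
      unfolding power_mult_distrib R2 by (simp add: algebra_simps power2_eq_square)
    have "0 \<le> 1 - (t * R \<phi>)\<^sup>2" unfolding A2 using t1 kt by simp
    then have Ab: "\<bar>t * R \<phi>\<bar> \<le> 1" using abs_square_le_1[of "t * R \<phi>"] by linarith
    have sinph: "sin (ph u) = t * R \<phi>" unfolding phu t_def[symmetric] using Ab by (simp add: abs_le_iff)
    have sn: "jacobi_sn k (p * u) = t" unfolding jacobi_sn_def v_def[symmetric] ph(3) t_def ..
    have dn: "(jacobi_dn k (p * u))\<^sup>2 = 1 - k\<^sup>2 * t\<^sup>2" unfolding jacobi_dn_def sn using kt by simp
    show ?case unfolding p_def[symmetric] sinph sn dn power_mult_distrib R2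
      by (simp add: algebra_simps)
  qed
qed


end
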